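(* Let $q\ge2$ be an integer, $[q]=\{0,\dots,q-1\}$, and let $X_{\mathrm{rep}}=\{(\dots,a,a,a,\dots): a\in[q]\}\subseteq[q]^{\mathbb{Z}}$ be the $q$-ary repetition system. Let $\mu^{\mathsf{u}}$ be the uniform Bernoulli i.i.d. measure on $[q]^{\mathbb{Z}}$. Then \[R_0(X_{\mathrm{rep}},[q]^{\mathbb{Z}},\mu^{\mathsf{u}})=R(X_{\mathrm{rep}},[q]^{\mathbb{Z}})=1-\frac1q.\]
   Context: For a shift space $X\subseteq\Sigma^{\mathbb{Z}}$, $\mathscr{B}_n(X)$ is the set of length-$n$ words appearing as consecutive subwords of elements of $X$ (so $\mathscr{B}_n([q]^{\mathbb{Z}})=[q]^n$). $d$ is the Hamming distance and $B_r(\overline{x})$ the Hamming ball of radius $r$. For $A,C\subseteq\Sigma^n$: $R(C,A)=\max_{\overline{y}\in A}\min_{\overline{x}\in C}d(\overline{x},\overline{y})$, and for a probability measure $\eta$ on $\Sigma^n$ and $\varepsilon>0$, $R_\varepsilon(C,A,\eta)=\min\{r\in\mathbb{Z}_{\ge0}:\eta(A\cap\bigcup_{\overline{x}\in C}B_r(\overline{x}))\ge1-\varepsilon\}$. For shift spaces $X,Y$: $R(X,Y)=\liminf_n\frac1nR(\mathscr{B}_n(X),\mathscr{B}_n(Y))$. For a shift-invariant ergodic probability measure $\mu$ on $Y$, with $\mu_n$ its marginal on coordinates $0,\dots,n-1$: $R_\varepsilon(X,Y,\mu)=\liminf_n\frac1nR_\varepsilon(\mathscr{B}_n(X),\mathscr{B}_n(Y),\mu_n)$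 and the essential covering radius is $R_0(X,Y,\mu)=\lim_{\varepsilon\to0}R_\varepsilon(X,Y,\mu)$. *)

theory Defs
  imports "HOL-Probability.Probability"
begin

definition hamming :: "'a list \<Rightarrow> 'a list \<Rightarrow> nat" where
  "hamming x y = card {i. i < length x \<and> x ! i \<noteq> y ! i}"

definition hball :: "'a list \<Rightarrow> nat \<Rightarrow> 'a list set" where
  "hball x r = {y. length y = length x \<and> hamming x y \<le> r}"

definition blocks :: "nat \<Rightarrow> (int \<Rightarrow> 'a) set \<Rightarrow> 'a list set" where
  "blocks n X = {map (\<lambda>k. x (i + int k)) [0..<n] | x i. x \<in> X}"

definition cov_radius :: "'a list set \<Rightarrow> 'a list set \<Rightarrow> nat" where
  "cov_radius C A = Max ((\<lambda>y. Min ((\<lambda>x. hamming x y) ` C)) ` A)"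

definition cov_radius_eps :: "'a list set \<Rightarrow> 'a list set \<Rightarrow> 'a list pmf \<Rightarrow> real \<Rightarrow> nat" where
  "cov_radius_eps C A \<eta> \<epsilon> =
     (LEAST r::nat. measure_pmf.prob \<eta> (A \<inter> (\<Union>x\<in>C. hball x r)) \<ge> 1 - \<epsilon>)"

definition shift_cov_radius :: "(int \<Rightarrow> 'a) set \<Rightarrow> (int \<Rightarrow> 'a) set \<Rightarrow> ereal" where
  "shift_cov_radius X Y =
     liminf (\<lambda>n. ereal (real (cov_radius (blocks n X) (blocks n Y)) / real n))"

text \<open>R_eps(X,Y,mu), where mu is given through its family of marginals
  \<open>\<mu> n\<close> on the coordinates 0,...,n-1.\<close>
definition shift_cov_radius_eps ::
  "(int \<Rightarrow> 'a) set \<Rightarrow> (int \<Rightarrow> 'a) set \<Rightarrow> (nat \<Rightarrow> 'a list pmf) \<Rightarrow> real \<Rightarrow> ereal" where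
  "shift_cov_radius_eps X Y \<mu> \<epsilon> =
     liminf (\<lambda>n. ereal (real (cov_radius_eps (blocks n X) (blocks n Y) (\<mu> n) \<epsilon>) / real n))"

definition full_shift :: "nat \<Rightarrow> (int \<Rightarrow> nat) set" where
  "full_shift q = {x. \<forall>i. x i < q}"

definition rep_system :: "nat \<Rightarrow> (int \<Rightarrow> nat) set" where
  "rep_system q = {(\<lambda>_. a) | a. a < q}"

definition unif_bernoulli_marginal :: "nat \<Rightarrow> nat \<Rightarrow> nat list pmf" where
  "unif_bernoulli_marginal q n = pmf_of_set {w. length w = n \<and> set w \<subseteq> {0..<q}}"

end

theory Submission
  imports Defs
begin

definition W :: "nat \<Rightarrow> nat \<Rightarrow> nat list set" where
  "W q n = {w. length w = n \<and> set w \<subseteq> {0..<q}}"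

lemma W_eq: "W q n = {xs. set xs \<subseteq> {0..<q} \<and> length xs = n}"
  unfolding W_def by auto

lemma W_finite: "finite (W q n)"
  unfolding W_eq by (rule finite_lists_length_eq) simp

lemma W_card: "card (W q n) = q ^ n"
  unfolding W_eq by (subst card_lists_length_eq) simp_all

lemma W_Suc_sum:
  fixes f :: "nat list \<Rightarrow> real"
  shows "(\<Sum>w\<in>W q (Suc n). f w) = (\<Sum>w\<in>W q n. \<Sum>x\<in>{0..<q}. f (x # w))"
proof -
  have inj: "inj_on (\<lambda>(xs, n). n#xs) (W q n \<times> {0..<q})"
    by (auto simp: inj_on_def)
  have "(\<Sum>w\<in>W q (Suc n). f w) = (\<Sum>p\<in>W q n \<times> {0..<q}. f ((\<lambda>(xs, n). n#xs) p))"
    unfolding W_eq lists_length_Suc_eq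
    using inj unfolding W_eq by (subst sum.reindex) auto
  also have "\<dots> = (\<Sum>w\<in>W q n. \<Sum>x\<in>{0..<q}. f (x # w))"
    by (subst sum.cartesian_product) (auto intro!: sum.cong)
  finally show ?thesis .
qed


lemma moment1:
  assumes "a < q"
  shows "(\<Sum>w\<in>W q n. real (count_list w a)) = real n * real q ^ n / real q"
proof (induction n)
  case 0
  then show ?case by (simp add: W_def)
next
  case (Suc n)
  have "(\<Sum>w\<in>W q (Suc n). real (count_list w a))
      = (\<Sum>w\<in>W q n. \<Sum>x\<in>{0..<q}. real (count_list w a) + (if x = a then 1 else 0))"
    by (subst W_Suc_sum) (auto intro!: sum.cong)
  also have "\<dots> = (\<Sum>w\<in>W q n. real q * real (count_list w a) + 1)"
    using assms by (simp add: sum.distrib sum.delta')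
  also have "\<dots> = real q * (\<Sum>w\<in>W q n. real (count_list w a)) + real q ^ n"
    by (simp add: sum.distrib sum_distrib_left W_card)
  also have "\<dots> = real (Suc n) * real q ^ Suc n / real q"
    using Suc assms by (simp add: field_simps)
  finally show ?case .
qed

lemma moment2:
  assumes "a < q"
  shows "(\<Sum>w\<in>W q n. real (count_list w a)^2) = real q ^ n * (real n / q + real n * (real n - 1) / q^2)"
proof (induction n)
  case 0
  then show ?case by (simp add: W_def)
next
  case (Suc n)
  have "(\<Sum>w\<in>W q (Suc n). real (count_list w a)^2)
      = (\<Sum>w\<in>W q n. \<Sum>x\<in>{0..<q}. real (count_list w a)^2 + (if x = a then 2 * real (count_list w a) + 1 else 0))"
    by (subst W_Suc_sum) (auto intro!: sum.cong simp: power2_eq_square algebra_simps)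
  also have "\<dots> = (\<Sum>w\<in>W q n. real q * real (count_list w a)^2 + 2 * real (count_list w a) + 1)"
    using assms by (simp add: sum.distrib sum.delta')
  also have "\<dots> = real q * (\<Sum>w\<in>W q n. real (count_list w a)^2) + 2 * (\<Sum>w\<in>W q n. real (count_list w a)) + real q ^ n"
    by (simp add: sum.distrib sum_distrib_left W_card)
  also have "\<dots> = real q ^ Suc n * (real (Suc n) / q + real (Suc n) * (real (Suc n) - 1) / q^2)"
    unfolding Suc.IH moment1[OF assms] using assms by (simp add: field_simps power2_eq_square)
  finally show ?case .
qed

lemma variance:
  assumes "a < q"
  shows "(\<Sum>w\<in>W q n. (real (count_list w a) - real n / q)^2) \<le> real q ^ n * real n / q"
proof -
  have q: "real q > 0" using assms by simp
  have "(\<Sum>w\<in>W q n. (real (count_list w a) - real n / q)^2)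
     = (\<Sum>w\<in>W q n. real (count_list w a)^2) - 2 * (real n / q) * (\<Sum>w\<in>W q n. real (count_list w a))
       + (real n / q)^2 * real q ^ n"
    by (simp add: power2_diff sum.distrib sum_subtractf sum_distrib_left sum_divide_distrib W_card algebra_simps)
  also have "\<dots> = real q ^ n * (real n / q - real n / q^2)"
    using q unfolding moment1[OF assms] moment2[OF assms] by (simp add: field_simps power2_eq_square)
  also have "\<dots> \<le> real q ^ n * real n / q"
    using q by (simp add: field_simps)
  finally show ?thesis .
qed

lemma cheb:
  assumes "a < q" "t > 0"
  shows "real (card {w\<in>W q n. real (count_list w a) \<ge> real n / q + t}) \<le> real q ^ n * real n / q / t^2"
proof -
  let ?S = "{w\<in>W q n. real (count_list w a) \<ge> real n / q + t}"
  have "real (card ?S) * t^2 = (\<Sum>w\<in>?S. t^2)" by simp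
  also have "\<dots> \<le> (\<Sum>w\<in>?S. (real (count_list w a) - real n / q)^2)"
    using assms by (intro sum_mono power_mono) auto
  also have "\<dots> \<le> (\<Sum>w\<in>W q n. (real (count_list w a) - real n / q)^2)"
    by (intro sum_mono2 W_finite) auto
  also have "\<dots> \<le> real q ^ n * real n / q" by (rule variance[OF assms(1)])
  finally show ?thesis using assms by (simp add: field_simps)
qed


lemma blocks_rep: "blocks n (rep_system q) = (\<lambda>a. replicate n a) ` {0..<q}"
proof
  show "blocks n (rep_system q) \<subseteq> (\<lambda>a. replicate n a) ` {0..<q}"
    unfolding blocks_def rep_system_def by (auto simp: map_replicate_const)
  show "(\<lambda>a. replicate n a) ` {0..<q} \<subseteq> blocks n (rep_system q)"
  proof
    fix w assume "w \<in> (\<lambda>a. replicate n a) ` {0..<q}"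
    then obtain a where a: "a < q" "w = replicate n a" by auto
    have "(\<lambda>_::int. a) \<in> rep_system q" using a unfolding rep_system_def by auto
    moreover have "w = map (\<lambda>k. (\<lambda>_::int. a) (0 + int k)) [0..<n]"
      using a by (simp add: map_replicate_const)
    ultimately show "w \<in> blocks n (rep_system q)" unfolding blocks_def
      by (intro CollectI exI conjI)
  qed
qed

lemma blocks_full: assumes "q > 0" shows "blocks n (full_shift q) = W q n"
proof
  show "blocks n (full_shift q) \<subseteq> W q n"
    unfolding blocks_def full_shift_def W_def by auto
next
  show "W q n \<subseteq> blocks n (full_shift q)"
  proof
    fix w assume w: "w \<in> W q n"
    define x where "x = (\<lambda>i::int. if 0 \<le> i \<and> i < int n then w ! nat i else 0)"
    have "x \<in> full_shift q"
      using w \<open>q > 0\<close> unfolding full_shift_def x_def W_def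
      by (auto simp: subset_iff)
    moreover have "w = map (\<lambda>k. x (0 + int k)) [0..<n]"
      using w unfolding W_def x_def by (auto intro: nth_equalityI)
    ultimately show "w \<in> blocks n (full_shift q)"
      unfolding blocks_def by blast
  qed
qed

lemma hamming_rep:
  assumes "length y = n"
  shows "hamming (replicate n a) y = n - count_list y a"
proof -
  have "hamming (replicate n a) y = length (filter (\<lambda>z. a \<noteq> z) y)"
    unfolding hamming_def length_filter_conv_card using assms
    by (auto intro!: arg_cong[where f=card])
  moreover have "length (filter ((=) a) y) + length (filter (\<lambda>z. a \<noteq> z) y) = n"
    using sum_length_filter_compl[of "(=) a" y] assms by simp
  ultimately show ?thesis by (simp add: count_list_eq_length_filter)
qed

lemma sum_count: "set (y::nat list) \<subseteq> {0..<q} \<Longrightarrow> (\<Sum>a\<in>{0..<q}. count_list y a) = length y"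
proof (induction y)
  case Nil
  then show ?case by simp
next
  case (Cons x y)
  have "(\<Sum>a\<in>{0..<q}. count_list (x # y) a) = (\<Sum>a\<in>{0..<q}. count_list y a + (if x = a then 1 else 0))"
    by (intro sum.cong) auto
  also have "\<dots> = (\<Sum>a\<in>{0..<q}. count_list y a) + 1"
  proof -
    have "(\<Sum>a\<in>{0..<q}. (if x = a then 1 else 0::nat)) = 1"
      using Cons.prems by (subst sum.delta'[OF finite_atLeastLessThan]) simp
    then show ?thesis by (simp add: sum.distrib)
  qed
  finally show ?case using Cons by simp
qed

definition D :: "nat \<Rightarrow> nat \<Rightarrow> nat list \<Rightarrow> nat" where
  "D q n y = Min ((\<lambda>x. hamming x y) ` blocks n (rep_system q))"

lemma D_eq:
  assumes "length y = n" "q > 0"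
  shows "D q n y = Min ((\<lambda>a. n - count_list y a) ` {0..<q})"
  unfolding D_def blocks_rep image_image using assms
  by (intro arg_cong[where f=Min] image_cong) (auto simp: hamming_rep simp del: replicate.simps)

lemma D_upper:
  assumes "y \<in> W q n" "q > 0"
  shows "real (D q n y) \<le> real n - real n / q"
proof -
  have len: "length y = n" and s: "set y \<subseteq> {0..<q}" using assms by (auto simp: W_def)
  have "\<exists>a\<in>{0..<q}. real n / q \<le> real (count_list y a)"
  proof (rule ccontr)
    assume "\<not> ?thesis"
    then have "(\<Sum>a\<in>{0..<q}. real (count_list y a)) < (\<Sum>a\<in>{0..<q}. real n / q)"
      using assms(2) by (intro sum_strict_mono) (auto simp: not_le)
    also have "\<dots> = real n" using assms(2) by simp
    finally show False using sum_count[OF s] len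
      by (metis of_nat_sum less_irrefl)
  qed
  then obtain a where a: "a < q" "real n / q \<le> real (count_list y a)" by auto
  have "D q n y \<le> n - count_list y a"
    unfolding D_eq[OF len assms(2)] using a by (intro Min_le) auto
  moreover have "count_list y a \<le> n" using len
    by (metis count_le_length)
  ultimately show ?thesis using a by (simp add: of_nat_diff)
qed


lemma count_mod_le:
  assumes "q > 0"
  shows "count_list (map (\<lambda>i. i mod q) [0..<n]) a \<le> n div q + 1"
proof -
  let ?S = "{i. i < n \<and> a = i mod q}"
  have "count_list (map (\<lambda>i. i mod q) [0..<n]) a = card ?S"
    unfolding count_list_eq_length_filter length_filter_conv_card
    by (intro arg_cong[where f=card]) auto
  also have "card ?S \<le> card {0..n div q}"
  proof (rule card_inj_on_le)
    show "inj_on (\<lambda>i. i div q) ?S"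
      by (auto simp: inj_on_def) (metis div_mult_mod_eq)
    show "(\<lambda>i. i div q) ` ?S \<subseteq> {0..n div q}"
      by (auto intro!: div_le_mono)
  qed simp
  finally show ?thesis by simp
qed

lemma W_nonempty: "q > 0 \<Longrightarrow> W q n \<noteq> {}"
  unfolding W_def by (auto intro!: exI[of _ "replicate n 0"])

lemma cov_eq: "cov_radius (blocks n (rep_system q)) (blocks n (full_shift q)) = Max (D q n ` W q n)"
  if "q > 0" using that unfolding cov_radius_def D_def blocks_full[OF that] by simp

lemma cov_upper:
  assumes "q > 0"
  shows "real (cov_radius (blocks n (rep_system q)) (blocks n (full_shift q))) \<le> real n - real n / q"
proof -
  obtain y where y: "y \<in> W q n" "cov_radius (blocks n (rep_system q)) (blocks n (full_shift q)) = D q n y"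
    unfolding cov_eq[OF assms] using Max_in[of "D q n ` W q n"] W_finite W_nonempty[OF assms] by fastforce
  show ?thesis using D_upper[OF y(1) assms] y(2) by simp
qed

lemma cov_lower:
  assumes "q > 0"
  shows "real (cov_radius (blocks n (rep_system q)) (blocks n (full_shift q))) \<ge> real n - real n / q - 1"
proof -
  define y where "y = map (\<lambda>i. i mod q) [0..<n]"
  have yW: "y \<in> W q n" unfolding y_def W_def using assms by auto
  have len: "length y = n" unfolding y_def by simp
  obtain a where a: "a < q" "D q n y = n - count_list y a"
    unfolding D_eq[OF len assms] using Min_in[of "(\<lambda>a. n - count_list y a) ` {0..<q}"] assms by fastforce
  have "real (count_list y a) \<le> real (n div q) + 1"
    using count_mod_le[OF assms, of n a] unfolding y_def by linarith
  also have "real (n div q) \<le> real n / q"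
  proof -
    have "(n div q) * q \<le> n" using div_mult_mod_eq[of n q] by (metis le_add1)
    then have "real (n div q) * real q \<le> real n" by (metis of_nat_le_iff of_nat_mult)
    then show ?thesis using assms by (simp add: field_simps)
  qed
  finally have "real n - real n / q - 1 \<le> real (D q n y)" using a(2) by (simp add: of_nat_diff)
  also have "D q n y \<le> Max (D q n ` W q n)" using yW W_finite by simp
  finally show ?thesis unfolding cov_eq[OF assms] by simp
qed


abbreviation Rn where "Rn q n \<equiv> cov_radius (blocks n (rep_system q)) (blocks n (full_shift q))"
abbreviation Re where "Re q n \<epsilon> \<equiv> cov_radius_eps (blocks n (rep_system q)) (blocks n (full_shift q)) (unif_bernoulli_marginal q n) \<epsilon>"

lemma marg_eq: "unif_bernoulli_marginal q n = pmf_of_set (W q n)"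
  unfolding unif_bernoulli_marginal_def W_def ..

lemma cover_all:
  assumes "q > 0"
  shows "blocks n (full_shift q) \<inter> (\<Union>x\<in>blocks n (rep_system q). hball x (Rn q n)) = W q n"
proof -
  have "y \<in> (\<Union>x\<in>blocks n (rep_system q). hball x (Rn q n))" if y: "y \<in> W q n" for y
  proof -
    have len: "length y = n" using y by (simp add: W_def)
    obtain a where a: "a < q" "D q n y = n - count_list y a"
      unfolding D_eq[OF len assms] using Min_in[of "(\<lambda>a. n - count_list y a) ` {0..<q}"] assms by fastforce
    have "D q n y \<le> Rn q n" unfolding cov_eq[OF assms] using y W_finite by simp
    then have "y \<in> hball (replicate n a) (Rn q n)"
      using a len unfolding hball_def by (simp add: hamming_rep)
    moreover have "replicate n a \<in> blocks n (rep_system q)" unfolding blocks_rep using a(1) by (intro imageI) simp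
    ultimately show ?thesis by blast
  qed
  then show ?thesis unfolding blocks_full[OF assms] by blast
qed

lemma prop_ex:
  assumes "q > 0" "\<epsilon> \<ge> 0"
  shows "measure_pmf.prob (unif_bernoulli_marginal q n)
           (blocks n (full_shift q) \<inter> (\<Union>x\<in>blocks n (rep_system q). hball x (Rn q n))) \<ge> 1 - \<epsilon>"
proof -
  have "measure_pmf.prob (unif_bernoulli_marginal q n) (W q n) = 1"
    unfolding marg_eq using W_finite W_nonempty[OF assms(1)]
    by (simp add: measure_pmf_of_set card_gt_0_iff)
  then show ?thesis unfolding cover_all[OF assms(1)] using assms(2) by simp
qed

lemma Re_le: "q > 0 \<Longrightarrow> \<epsilon> \<ge> 0 \<Longrightarrow> Re q n \<epsilon> \<le> Rn q n"
  unfolding cov_radius_eps_def by (rule Least_le) (rule prop_ex)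

lemma Re_ge:
  assumes q: "q > 0" and e: "\<epsilon> < 1" "\<epsilon> \<ge> 0" and d: "\<delta> > 0" and n: "n > 0"
    and small: "1 / (\<delta>^2 * real n) < 1 - \<epsilon>"
  shows "real (Re q n \<epsilon>) \<ge> real n - real n / q - \<delta> * real n"
proof (rule ccontr)
  let ?r = "Re q n \<epsilon>"
  let ?B = "blocks n (full_shift q) \<inter> (\<Union>x\<in>blocks n (rep_system q). hball x ?r)"
  let ?S = "\<lambda>a. {w\<in>W q n. real (count_list w a) \<ge> real n / q + \<delta> * real n}"
  assume "\<not> ?thesis"
  then have rlt: "real ?r < real n - real n / q - \<delta> * real n" by simp
  have P: "measure_pmf.prob (unif_bernoulli_marginal q n) ?B \<ge> 1 - \<epsilon>"
    unfolding cov_radius_eps_def by (rule LeastI_ex) (use prop_ex[OF q e(2)] in blast)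
  have sub: "?B \<subseteq> (\<Union>a\<in>{0..<q}. ?S a)"
  proof
    fix y assume "y \<in> ?B"
    then obtain a where y: "y \<in> W q n" "a < q" "y \<in> hball (replicate n a) ?r"
      unfolding blocks_full[OF q] blocks_rep by auto
    have len: "length y = n" using y by (simp add: W_def)
    have "n - count_list y a \<le> ?r" using y(3) len unfolding hball_def by (simp add: hamming_rep)
    moreover have "count_list y a \<le> n" using len by (metis count_le_length)
    ultimately have "real n - real (count_list y a) \<le> real ?r" by linarith
    then have "real (count_list y a) \<ge> real n / q + \<delta> * real n" using rlt by linarith
    then show "y \<in> (\<Union>a\<in>{0..<q}. ?S a)" using y by auto
  qed
  have cardW: "real (card (W q n)) = real q ^ n" by (simp add: W_card)
  have "measure_pmf.prob (unif_bernoulli_marginal q n) ?B = real (card (W q n \<inter> ?B)) / real q ^ n"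
    unfolding marg_eq using W_finite W_nonempty[OF q] cardW by (simp add: measure_pmf_of_set)
  also have "real (card (W q n \<inter> ?B)) \<le> real (card (\<Union>a\<in>{0..<q}. ?S a))"
    using sub W_finite by (intro of_nat_mono card_mono) auto
  also have "\<dots> \<le> real (\<Sum>a\<in>{0..<q}. card (?S a))"
    by (intro of_nat_mono card_UN_le) simp
  also have "\<dots> = (\<Sum>a\<in>{0..<q}. real (card (?S a)))" by simp
  also have "\<dots> \<le> (\<Sum>a\<in>{0..<q}. real q ^ n * real n / q / (\<delta> * real n)^2)"
    using d n by (intro sum_mono cheb) auto
  also have "\<dots> = real q ^ n * (1 / (\<delta>^2 * real n))"
    using q n d by (simp add: field_simps power2_eq_square)
  finally have "measure_pmf.prob (unif_bernoulli_marginal q n) ?B \<le> 1 / (\<delta>^2 * real n)"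
    using q by (simp add: divide_right_mono field_simps)
  then show False using P small by linarith
qed


lemma Rn_lim:
  assumes q: "q > 0"
  shows "(\<lambda>n. real (Rn q n) / real n) \<longlonglongrightarrow> 1 - 1 / real q"
proof (rule tendsto_sandwich[where f="\<lambda>n. 1 - 1 / real q - 1 / real n" and h="\<lambda>n. 1 - 1 / real q"])
  show "\<forall>\<^sub>F n in sequentially. 1 - 1 / real q - 1 / real n \<le> real (Rn q n) / real n"
    using eventually_gt_at_top[of 0]
  proof eventually_elim
    case (elim n)
    have "(real n - real n / q - 1) / real n \<le> real (Rn q n) / real n"
      using cov_lower[OF q, of n] elim by (intro divide_right_mono) auto
    then show ?case using elim by (simp add: field_simps)
  qed
  show "\<forall>\<^sub>F n in sequentially. real (Rn q n) / real n \<le> 1 - 1 / real q"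
    using eventually_gt_at_top[of 0]
  proof eventually_elim
    case (elim n)
    have "real (Rn q n) / real n \<le> (real n - real n / q) / real n"
      using cov_upper[OF q, of n] elim by (intro divide_right_mono) auto
    then show ?case using elim by (simp add: field_simps)
  qed
  show "(\<lambda>n. 1 - 1 / real q - 1 / real n) \<longlonglongrightarrow> 1 - 1 / real q"
    by (auto intro!: tendsto_eq_intros lim_const_over_n)
qed simp

lemma Rn_liminf:
  assumes q: "q > 0"
  shows "liminf (\<lambda>n. ereal (real (Rn q n) / real n)) = ereal (1 - 1 / real q)"
  by (rule lim_imp_Liminf) (use Rn_lim[OF q] in auto)

lemma Re_liminf:
  assumes q: "q > 0" and e: "0 < \<epsilon>" "\<epsilon> < 1"
  shows "liminf (\<lambda>n. ereal (real (Re q n \<epsilon>) / real n)) = ereal (1 - 1 / real q)"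
proof (rule antisym)
  have "liminf (\<lambda>n. ereal (real (Re q n \<epsilon>) / real n)) \<le> liminf (\<lambda>n. ereal (real (Rn q n) / real n))"
    using Re_le[OF q, of \<epsilon> ] e by (intro Liminf_mono always_eventually allI) (auto intro!: divide_right_mono)
  then show "liminf (\<lambda>n. ereal (real (Re q n \<epsilon>) / real n)) \<le> ereal (1 - 1 / real q)"
    using Rn_liminf[OF q] by simp
next
  show "ereal (1 - 1 / real q) \<le> liminf (\<lambda>n. ereal (real (Re q n \<epsilon>) / real n))"
    unfolding le_Liminf_iff
  proof (intro allI impI)
    fix y assume "y < ereal (1 - 1 / real q)"
    then obtain z where z: "y < ereal z" "ereal z < ereal (1 - 1 / real q)"
      using ereal_dense2 by blast
    define \<delta> where "\<delta> = (1 - 1 / real q - z) / 2"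
    have d: "\<delta> > 0" using z(2) unfolding \<delta>_def by simp
    have "(\<lambda>n. (1 / \<delta>^2) / real n) \<longlonglongrightarrow> 0" by (rule lim_const_over_n)
    then have ev: "\<forall>\<^sub>F n in sequentially. (1 / \<delta>^2) / real n < 1 - \<epsilon>"
      using e by (intro order_tendstoD(2)) auto
    show "\<forall>\<^sub>F n in sequentially. y < ereal (real (Re q n \<epsilon>) / real n)"
      using ev eventually_gt_at_top[of 0]
    proof eventually_elim
      case (elim n)
      have small: "1 / (\<delta>^2 * real n) < 1 - \<epsilon>" using elim by (simp add: field_simps)
      have "real n - real n / q - \<delta> * real n \<le> real (Re q n \<epsilon>)"
        using Re_ge[OF q e(2) _ d _ small] e elim by auto
      then have "(real n - real n / q - \<delta> * real n) / real n \<le> real (Re q n \<epsilon>) / real n"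
        using elim by (intro divide_right_mono) auto
      moreover have "(real n - real n / q - \<delta> * real n) / real n = 1 - 1 / real q - \<delta>"
        using elim by (simp add: field_simps)
      ultimately have "1 - 1 / real q - \<delta> \<le> real (Re q n \<epsilon>) / real n"
        by simp
      moreover have "z < 1 - 1 / real q - \<delta>" using z(2) unfolding \<delta>_def by (simp add: field_simps)
      ultimately have "ereal z < ereal (real (Re q n \<epsilon>) / real n)" by simp
      then show ?case using z(1) by (rule order.strict_trans[rotated])
    qed
  qed
qed

theorem proposition17:
  fixes q :: nat
  assumes "q \<ge> 2"
  shows "((\<lambda>\<epsilon>. shift_cov_radius_eps (rep_system q) (full_shift q) (unif_bernoulli_marginal q) \<epsilon>)
            \<longlongrightarrow> ereal (1 - 1 / real q)) (at_right 0)
         \<and> shift_cov_radius (rep_system q) (full_shift q) = ereal (1 - 1 / real q)"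
proof
  have q: "q > 0" using assms by simp
  show "((\<lambda>\<epsilon>. shift_cov_radius_eps (rep_system q) (full_shift q) (unif_bernoulli_marginal q) \<epsilon>)
            \<longlongrightarrow> ereal (1 - 1 / real q)) (at_right 0)"
  proof (rule tendsto_eventually)
    show "\<forall>\<^sub>F \<epsilon> in at_right 0. shift_cov_radius_eps (rep_system q) (full_shift q) (unif_bernoulli_marginal q) \<epsilon>
            = ereal (1 - 1 / real q)"
      unfolding eventually_at_right_field shift_cov_radius_eps_def
      using Re_liminf[OF q] by (intro exI[of _ 1]) auto
  qed
  show "shift_cov_radius (rep_system q) (full_shift q) = ereal (1 - 1 / real q)"
    unfolding shift_cov_radius_def using Rn_liminf[OF q] .
qed

end
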